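(* Let $N_1(I_1,O_1,r_1)$ and $N_2(I_2,O_2,r_2)$ be negators. Form the $(2,2,1)$-pole $M=\operatorname{NN}(N_1,N_2)$ by performing the junction of the connectors $O_1$ and $I_2$, and adding one new vertex $v$ incident with the semiedges $r_1$, $r_2$ (i.e. the dangling edges of $r_1$ and $r_2$ are joined to $v$) and with one new dangling edge whose free end is the semiedge $r_3$; the connectors of $M$ are $I_1=\{i,i'\}$, $O_2=\{o,o'\}$ and $\{r_3\}$. Then for every colouring $\varphi$ of $M$ we have $\varphi(i)\ne\varphi(i')$, $\varphi(o)\ne\varphi(o')$ and $\varphi(i)+\varphi(i')+\varphi(o)+\varphi(o')+\varphi(r_3)=0$. Moreover, if $N_1$ and $N_2$ are both perfect, then for every $5$-tuple $(a,b,c,d,e)\in\mathbb{K}^5$ with $a\ne b$, $c\ne d$ and $a+b+c+d+e=0$ there is a colouring $\varphi$ of $M$ with $(\varphi(i),\varphi(i'),\varphi(o),\varphi(o'),\varphi(r_3))=(a,b,c,d,e)$.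
   Context: A multipole consists of vertices and edges; each edge has two ends, each either incident with a vertex or free; a free end is a semiedge. A dangling edge has exactly one end at a vertex, an isolated edge has none. All multipoles are cubic (every vertex is incident with exactly three edge ends; loops and parallel edges allowed). The semiedges are partitioned into connectors; a $(c_1,\dots,c_n)$-pole has $n$ connectors of sizes $c_1,\dots,c_n$. The junction of two semiedges identifies the two free ends into a single edge; the junction of two connectors of equal size performs junctions of their semiedges along a bijection (arbitrary unless stated). Let $\mathbb{K}=\{(0,1),(1,0),(1,1)\}\subset\mathbb{Z}_2\times\mathbb{Z}_2$. A colouring of a multipole is an assignment of elements of $\mathbb{K}$ to its edges such that at each vertex the three incident edge ends receive distinct colours (equivalently, they sum to $0$). A snark is a connected cubic graph with no such colouring. Negator: let $G$ be a snark and $uwv$ a path of length two in $G$; $\operatorname{Neg}(G;u,v)$ is the $(2,2,1)$-pole $N(I,O,r)$ obtained by deleting $u,w,v$, where $I$ consists of the two semiedges formerly incident with $u$, $O$ of the two semiedges formerly incident with $v$, and $r$ is the semiedge formerly incident with $w$. A negator $N(\{i_1,i_2\},\{o_1,o_2\},r)$ is perfect if the set of tuples $(\varphi(i_1),\varphi(i_2),\varphi(o_1),\varphi(o_2),\varphi(r))$ over all colourings $\varphi$ of $N$ equals $\{(x,x,a,b,a+b),(a,b,x,x,a+b): x,a,b\in\mathbb{K},\ a\ne b\}$. *)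

theory Defs
  imports Main "HOL-Library.Z2" "HOL-Library.Product_Plus"
begin

type_synonym colour = "bit \<times> bit"

definition KK :: "colour set" where
  "KK = {(0,1), (1,0), (1,1)}"

text \<open>A multipole: vertices, edge ends ('h), edges ('e); every end belongs to an edge
  (edge_of) and is either attached to a vertex (att h = Some v) or free (att h = None,
  a semiedge).\<close>

record ('v, 'h, 'e) multipole =
  verts :: "'v set"
  hends :: "'h set"
  edges :: "'e set"
  edge_of :: "'h \<Rightarrow> 'e"
  att :: "'h \<Rightarrow> 'v option"

definition ends_at :: "('v, 'h, 'e) multipole \<Rightarrow> 'v \<Rightarrow> 'h set" where
  "ends_at M x = {h \<in> hends M. att M h = Some x}"

definition semiedges :: "('v, 'h, 'e) multipole \<Rightarrow> 'h set" where
  "semiedges M = {h \<in> hends M. att M h = None}"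

definition cubic_multipole :: "('v, 'h, 'e) multipole \<Rightarrow> bool" where
  "cubic_multipole M \<longleftrightarrow>
     finite (verts M) \<and> finite (hends M) \<and> finite (edges M) \<and>
     (\<forall>h \<in> hends M. edge_of M h \<in> edges M) \<and>
     (\<forall>e \<in> edges M. card {h \<in> hends M. edge_of M h = e} = 2) \<and>
     (\<forall>h \<in> hends M. \<forall>x. att M h = Some x \<longrightarrow> x \<in> verts M) \<and>
     (\<forall>x \<in> verts M. card (ends_at M x) = 3)"

definition colouring :: "('v, 'h, 'e) multipole \<Rightarrow> ('e \<Rightarrow> colour) \<Rightarrow> bool" where
  "colouring M \<phi> \<longleftrightarrow>
     (\<forall>e \<in> edges M. \<phi> e \<in> KK) \<and>
     (\<forall>x \<in> verts M. \<forall>h1 \<in> ends_at M x. \<forall>h2 \<in> ends_at M x.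
        h1 \<noteq> h2 \<longrightarrow> \<phi> (edge_of M h1) \<noteq> \<phi> (edge_of M h2))"

definition adjacent :: "('v, 'h, 'e) multipole \<Rightarrow> 'v \<Rightarrow> 'v \<Rightarrow> bool" where
  "adjacent M x y \<longleftrightarrow> (\<exists>h1 \<in> hends M. \<exists>h2 \<in> hends M. h1 \<noteq> h2 \<and>
      edge_of M h1 = edge_of M h2 \<and> att M h1 = Some x \<and> att M h2 = Some y)"

definition connected_mp :: "('v, 'h, 'e) multipole \<Rightarrow> bool" where
  "connected_mp M \<longleftrightarrow> verts M \<noteq> {} \<and>
     (\<forall>x \<in> verts M. \<forall>y \<in> verts M. (x, y) \<in> {(a, b). adjacent M a b}\<^sup>*)"

definition snark :: "('v, 'h, 'e) multipole \<Rightarrow> bool" where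
  "snark G \<longleftrightarrow> cubic_multipole G \<and> semiedges G = {} \<and> connected_mp G \<and>
     \<not> (\<exists>\<phi>. colouring G \<phi>)"

definition joins :: "('v, 'h, 'e) multipole \<Rightarrow> 'e \<Rightarrow> 'v \<Rightarrow> 'v \<Rightarrow> bool" where
  "joins G e x y \<longleftrightarrow> e \<in> edges G \<and> (\<exists>h1 \<in> hends G. \<exists>h2 \<in> hends G. h1 \<noteq> h2 \<and>
      edge_of G h1 = e \<and> edge_of G h2 = e \<and> att G h1 = Some x \<and> att G h2 = Some y)"

definition path2 :: "('v, 'h, 'e) multipole \<Rightarrow> 'v \<Rightarrow> 'v \<Rightarrow> 'v \<Rightarrow> 'e \<Rightarrow> 'e \<Rightarrow> bool" where
  "path2 G u w v e1 e2 \<longleftrightarrow> u \<in> verts G \<and> w \<in> verts G \<and> v \<in> verts G \<and>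
     u \<noteq> w \<and> w \<noteq> v \<and> u \<noteq> v \<and> e1 \<noteq> e2 \<and> joins G e1 u w \<and> joins G e2 w v"

definition Neg :: "('v, 'h, 'e) multipole \<Rightarrow> 'v \<Rightarrow> 'v \<Rightarrow> 'v \<Rightarrow> 'e \<Rightarrow> 'e \<Rightarrow> ('v, 'h, 'e) multipole" where
  "Neg G u w v e1 e2 =
     \<lparr> verts = verts G - {u, w, v},
       hends = {h \<in> hends G. edge_of G h \<notin> {e1, e2}},
       edges = edges G - {e1, e2},
       edge_of = edge_of G,
       att = (\<lambda>h. if att G h \<in> {Some u, Some w, Some v} then None else att G h) \<rparr>"

definition neg_ports :: "('v, 'h, 'e) multipole \<Rightarrow> 'v \<Rightarrow> 'v \<Rightarrow> 'v \<Rightarrow> 'e \<Rightarrow> 'e \<Rightarrow>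
     'h \<Rightarrow> 'h \<Rightarrow> 'h \<Rightarrow> 'h \<Rightarrow> 'h \<Rightarrow> bool" where
  "neg_ports G u w v e1 e2 i1 i2 o1 o2 r \<longleftrightarrow>
     i1 \<noteq> i2 \<and> o1 \<noteq> o2 \<and>
     {h \<in> hends G. edge_of G h \<notin> {e1, e2} \<and> att G h = Some u} = {i1, i2} \<and>
     {h \<in> hends G. edge_of G h \<notin> {e1, e2} \<and> att G h = Some v} = {o1, o2} \<and>
     {h \<in> hends G. edge_of G h \<notin> {e1, e2} \<and> att G h = Some w} = {r}"

definition perfect_neg :: "('v, 'h, 'e) multipole \<Rightarrow> 'h \<Rightarrow> 'h \<Rightarrow> 'h \<Rightarrow> 'h \<Rightarrow> 'h \<Rightarrow> bool" where
  "perfect_neg N i1 i2 o1 o2 r \<longleftrightarrow>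
     {(\<phi> (edge_of N i1), \<phi> (edge_of N i2), \<phi> (edge_of N o1), \<phi> (edge_of N o2), \<phi> (edge_of N r))
       | \<phi>. colouring N \<phi>}
     = {(x, x, a, b, a + b) | x a b. x \<in> KK \<and> a \<in> KK \<and> b \<in> KK \<and> a \<noteq> b}
       \<union> {(a, b, x, x, a + b) | x a b. x \<in> KK \<and> a \<in> KK \<and> b \<in> KK \<and> a \<noteq> b}"

text \<open>Ends of NN(N1,N2): ends of N1 (Inl), ends of N2 (Inr (Inl _)), and the two ends of
  the new dangling edge: Inr (Inr True) at the new vertex, Inr (Inr False) the free end r3.
  Vertices: Some (Inl _), Some (Inr _) and the new vertex None.
  Edges: the old edges of N1, N2 and the new edge Inr (Inr ()), where the edges carrying
  o1 and i1' (resp. o2 and i2') are identified by the junction; an edge of NN is an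
  equivalence class of old edges under the equivalence generated by these identifications.\<close>

definition nn_old_edge :: "('v1, 'h1, 'e1) multipole \<Rightarrow> ('v2, 'h2, 'e2) multipole \<Rightarrow>
     'h1 + 'h2 + bool \<Rightarrow> 'e1 + 'e2 + unit" where
  "nn_old_edge N1 N2 h = (case h of
       Inl h1 \<Rightarrow> Inl (edge_of N1 h1)
     | Inr (Inl h2) \<Rightarrow> Inr (Inl (edge_of N2 h2))
     | Inr (Inr b) \<Rightarrow> Inr (Inr ()))"

definition nn_cls :: "('v1, 'h1, 'e1) multipole \<Rightarrow> 'h1 \<Rightarrow> 'h1 \<Rightarrow>
     ('v2, 'h2, 'e2) multipole \<Rightarrow> 'h2 \<Rightarrow> 'h2 \<Rightarrow> 'e1 + 'e2 + unit \<Rightarrow> ('e1 + 'e2 + unit) set" where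
  "nn_cls N1 o1 o2 N2 j1 j2 x =
     (let R = {(Inl (edge_of N1 o1), Inr (Inl (edge_of N2 j1))),
               (Inl (edge_of N1 o2), Inr (Inl (edge_of N2 j2)))}
      in (R \<union> R\<inverse>)\<^sup>* `` {x})"

definition NN :: "('v1, 'h1, 'e1) multipole \<Rightarrow> 'h1 \<Rightarrow> 'h1 \<Rightarrow> 'h1 \<Rightarrow>
     ('v2, 'h2, 'e2) multipole \<Rightarrow> 'h2 \<Rightarrow> 'h2 \<Rightarrow> 'h2 \<Rightarrow>
     (('v1 + 'v2) option, 'h1 + 'h2 + bool, ('e1 + 'e2 + unit) set) multipole" where
  "NN N1 o1 o2 r1 N2 j1 j2 r2 =
     \<lparr> verts = Some ` (Inl ` verts N1 \<union> Inr ` verts N2) \<union> {None},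
       hends = Inl ` (hends N1 - {o1, o2}) \<union> Inr ` Inl ` (hends N2 - {j1, j2})
               \<union> {Inr (Inr True), Inr (Inr False)},
       edges = nn_cls N1 o1 o2 N2 j1 j2 `
               (Inl ` edges N1 \<union> Inr ` Inl ` edges N2 \<union> {Inr (Inr ())}),
       edge_of = (\<lambda>h. nn_cls N1 o1 o2 N2 j1 j2 (nn_old_edge N1 N2 h)),
       att = (\<lambda>h. case h of
                  Inl h1 \<Rightarrow> (if h1 = r1 then Some None else map_option (\<lambda>x. Some (Inl x)) (att N1 h1))
                | Inr (Inl h2) \<Rightarrow> (if h2 = r2 then Some None else map_option (\<lambda>x. Some (Inr x)) (att N2 h2))
                | Inr (Inr b) \<Rightarrow> (if b then Some None else None)) \<rparr>"

end

theory Submission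
  imports Defs
begin

lemma zero_colour [simp]: "(0::colour) = (0,0)"
  by (simp add: zero_prod_def)

lemma self_add: "(c::colour) + c = 0"
  by (cases c) simp

lemma zero_notin_KK: "0 \<notin> KK"
  by (auto simp: KK_def)

lemma KK_cases: "a \<in> KK \<Longrightarrow> a = (0,1) \<or> a = (1,0) \<or> a = (1,1)"
  by (auto simp: KK_def)

lemma KK_add:
  assumes "a \<in> KK" "b \<in> KK" "a \<noteq> b"
  shows "a + b \<in> KK" "a + b \<noteq> a" "a + b \<noteq> b"
  using KK_cases[OF assms(1)] KK_cases[OF assms(2)] assms(3) by (auto simp: KK_def)

lemma KK3:
  assumes "a \<in> KK" "b \<in> KK" "c \<in> KK" "a \<noteq> b" "b \<noteq> c" "a \<noteq> c"
  shows "a + b + c = 0"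
  using KK_cases[OF assms(1)] KK_cases[OF assms(2)] KK_cases[OF assms(3)] assms(4-6) by auto

lemma KK3':
  assumes "a \<in> KK" "b \<in> KK" "c \<in> KK" "a + b + c = 0"
  shows "a \<noteq> b" "b \<noteq> c" "a \<noteq> c"
  using KK_cases[OF assms(1)] KK_cases[OF assms(2)] KK_cases[OF assms(3)] assms(4) by auto

lemma cubicD:
  assumes "cubic_multipole N"
  shows "finite (verts N)" "finite (hends N)" "finite (edges N)"
    "\<And>h. h \<in> hends N \<Longrightarrow> edge_of N h \<in> edges N"
    "\<And>e. e \<in> edges N \<Longrightarrow> card {h \<in> hends N. edge_of N h = e} = 2"
    "\<And>h x. h \<in> hends N \<Longrightarrow> att N h = Some x \<Longrightarrow> x \<in> verts N"
    "\<And>x. x \<in> verts N \<Longrightarrow> card (ends_at N x) = 3"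
  using assms unfolding cubic_multipole_def by simp_all

lemma colouringD:
  assumes "colouring M \<phi>"
  shows "\<And>e. e \<in> edges M \<Longrightarrow> \<phi> e \<in> KK"
    "\<And>x h1 h2. x \<in> verts M \<Longrightarrow> h1 \<in> ends_at M x \<Longrightarrow> h2 \<in> ends_at M x \<Longrightarrow> h1 \<noteq> h2
      \<Longrightarrow> \<phi> (edge_of M h1) \<noteq> \<phi> (edge_of M h2)"
  using assms unfolding colouring_def by blast+

lemma parity:
  assumes "cubic_multipole N" "colouring N \<phi>"
  shows "(\<Sum>h\<in>semiedges N. \<phi> (edge_of N h)) = 0"
proof -
  let ?f = "\<lambda>h. \<phi> (edge_of N h)"
  note C = cubicD[OF assms(1)]
  note K = colouringD[OF assms(2)]
  have all: "(\<Sum>h\<in>hends N. ?f h) = 0"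
  proof -
    have "(\<Sum>h\<in>hends N. ?f h) = (\<Sum>e\<in>edges N. \<Sum>h\<in>{h. h\<in>hends N \<and> edge_of N h = e}. ?f h)"
      by (rule sum.group[symmetric]) (use C in auto)
    also have "... = 0"
    proof (rule sum.neutral, rule ballI)
      fix e assume e: "e \<in> edges N"
      then have "card {h\<in>hends N. edge_of N h = e} = 2" by (rule C(5))
      from card_2_iff[THEN iffD1, OF this]
      obtain a b where ab: "{h\<in>hends N. edge_of N h = e} = {a,b}" "a \<noteq> b" by blast
      then have ea: "edge_of N a = e" "edge_of N b = e" by auto
      have s2: "(\<Sum>h\<in>{a,b}. ?f h) = ?f a + ?f b" using ab(2) by simp
        show "(\<Sum>h\<in>{h. h\<in>hends N \<and> edge_of N h = e}. ?f h) = 0"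
        unfolding ab(1) s2 ea by (rule self_add)
    qed
    finally show ?thesis .
  qed
  let ?A = "{h\<in>hends N. att N h \<noteq> None}"
  have att0: "(\<Sum>h\<in>?A. ?f h) = 0"
  proof -
    have "(\<Sum>h\<in>?A. ?f h) = (\<Sum>x\<in>verts N. \<Sum>h\<in>{h. h\<in>?A \<and> the (att N h) = x}. ?f h)"
    proof (rule sum.group[symmetric])
      show "finite ?A" using C(2) by simp
      show "finite (verts N)" by (rule C(1))
      show "(\<lambda>h. the (att N h)) ` ?A \<subseteq> verts N"
      proof
        fix y assume "y \<in> (\<lambda>h. the (att N h)) ` ?A"
        then obtain h where h: "h \<in> hends N" "att N h \<noteq> None" "y = the (att N h)" by blast
        then have "att N h = Some y" by auto
        then show "y \<in> verts N" using h(1) by (rule C(6)[rotated])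
      qed
    qed
    also have "... = 0"
    proof (rule sum.neutral, rule ballI)
      fix x assume x: "x \<in> verts N"
      have eq: "{h. h\<in>?A \<and> the (att N h) = x} = ends_at N x" by (auto simp: ends_at_def)
      have "card (ends_at N x) = 3" using x by (rule C(7))
      from card_3_iff[THEN iffD1, OF this]
      obtain a b c where abc: "ends_at N x = {a,b,c}" "a \<noteq> b" "b \<noteq> c" "a \<noteq> c"
        by blast
      have inE: "a \<in> ends_at N x" "b \<in> ends_at N x" "c \<in> ends_at N x" using abc by auto
      have inH: "a \<in> hends N" "b \<in> hends N" "c \<in> hends N" using inE by (auto simp: ends_at_def)
      have inK: "?f a \<in> KK" "?f b \<in> KK" "?f c \<in> KK"
        using inH by (auto intro!: K(1) C(4))
      have d: "?f a \<noteq> ?f b" "?f b \<noteq> ?f c" "?f a \<noteq> ?f c"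
        using K(2)[OF x] inE abc(2-4) by blast+
      have s3: "(\<Sum>h\<in>{a,b,c}. ?f h) = ?f a + ?f b + ?f c" using abc(2-4) by (simp add: add.assoc)
      show "(\<Sum>h\<in>{h. h\<in>?A \<and> the (att N h) = x}. ?f h) = 0"
        unfolding eq abc(1) s3 by (rule KK3[OF inK d])
    qed
    finally show ?thesis .
  qed
  have sp1: "hends N = semiedges N \<union> ?A" 
    by (auto simp: semiedges_def)
  have sp2: "semiedges N \<inter> ?A = {}"
    by (auto simp: semiedges_def)
  have fs: "finite (semiedges N)" "finite ?A" using C(2) by (auto simp: semiedges_def)
  have "(\<Sum>h\<in>semiedges N \<union> ?A. ?f h) = (\<Sum>h\<in>semiedges N. ?f h) + (\<Sum>h\<in>?A. ?f h)"
    by (rule sum.union_disjoint[OF fs sp2])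
  then have "(\<Sum>h\<in>hends N. ?f h) = (\<Sum>h\<in>semiedges N. ?f h) + (\<Sum>h\<in>?A. ?f h)"
    by (simp only: sp1[symmetric])
  then show ?thesis using all att0 by (simp only: add_0_right)
qed



declare zero_colour[simp del]

lemma joins_ends:
  assumes "cubic_multipole G" "joins G e x y" "h \<in> hends G" "edge_of G h = e"
  shows "att G h = Some x \<or> att G h = Some y"
proof (rule ccontr)
  assume nh: "\<not> (att G h = Some x \<or> att G h = Some y)"
  note C = cubicD[OF assms(1)]
  from assms(2) obtain h1 h2 where hh: "e \<in> edges G" "h1 \<in> hends G" "h2 \<in> hends G" "h1 \<noteq> h2"
    "edge_of G h1 = e" "edge_of G h2 = e" "att G h1 = Some x" "att G h2 = Some y"
    unfolding joins_def by blast
  have "h \<noteq> h1" "h \<noteq> h2" using nh hh by auto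
  then have "card {h1, h2, h} = 3" using hh(4) by auto
  moreover have "{h1, h2, h} \<subseteq> {h\<in>hends G. edge_of G h = e}" using hh assms(3,4) by auto
  moreover have "finite {h\<in>hends G. edge_of G h = e}" using C(2) by simp
  ultimately have "3 \<le> card {h\<in>hends G. edge_of G h = e}" by (metis card_mono)
  then show False using C(5)[OF hh(1)] by simp
qed

lemma neg_cubic:
  assumes "cubic_multipole G" "path2 G u w v e1 e2"
  shows "cubic_multipole (Neg G u w v e1 e2)"
proof -
  note C = cubicD[OF assms(1)]
  have P: "joins G e1 u w" "joins G e2 w v" using assms(2) unfolding path2_def by blast+
  have notpath: "edge_of G h \<notin> {e1, e2}" if "h \<in> hends G" "att G h = Some x" "x \<notin> {u, w, v}" for h x
    using joins_ends[OF assms(1) P(1) that(1)] joins_ends[OF assms(1) P(2) that(1)] that(2,3) by auto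
  let ?N = "Neg G u w v e1 e2"
  have c1: "finite (verts ?N)" "finite (hends ?N)" "finite (edges ?N)"
    using C(1-3) by (simp_all add: Neg_def)
  have c2: "\<forall>h\<in>hends ?N. edge_of ?N h \<in> edges ?N" using C(4) by (simp add: Neg_def)
  have c3: "\<forall>e\<in>edges ?N. card {h\<in>hends ?N. edge_of ?N h = e} = 2"
  proof
    fix e assume e: "e \<in> edges ?N"
    then have "e \<in> edges G" "e \<notin> {e1, e2}" by (auto simp: Neg_def)
    moreover have "{h\<in>hends ?N. edge_of ?N h = e} = {h\<in>hends G. edge_of G h = e}"
      using calculation(2) by (auto simp: Neg_def)
    ultimately show "card {h\<in>hends ?N. edge_of ?N h = e} = 2" using C(5) by simp
  qed
  have c4: "\<forall>h\<in>hends ?N. \<forall>x. att ?N h = Some x \<longrightarrow> x \<in> verts ?N"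
  proof (intro ballI allI impI)
    fix h x assume h: "h \<in> hends ?N" and a: "att ?N h = Some x"
    have hG: "h \<in> hends G" using h by (simp add: Neg_def)
    have "att G h = Some x" "att G h \<notin> {Some u, Some w, Some v}"
      using a by (auto simp: Neg_def split: if_splits)
    then show "x \<in> verts ?N" using C(6)[OF hG] by (auto simp: Neg_def)
  qed
  have c5: "\<forall>x\<in>verts ?N. card (ends_at ?N x) = 3"
  proof
    fix x assume x: "x \<in> verts ?N"
    then have xG: "x \<in> verts G" "x \<notin> {u, w, v}" by (auto simp: Neg_def)
    have "ends_at ?N x = ends_at G x"
    proof (rule set_eqI)
      fix h
      show "h \<in> ends_at ?N x \<longleftrightarrow> h \<in> ends_at G x"
      proof
        assume "h \<in> ends_at ?N x"
        then show "h \<in> ends_at G x" by (auto simp: Neg_def ends_at_def split: if_splits)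
      next
        assume h: "h \<in> ends_at G x"
        then have "h \<in> hends G" "att G h = Some x" by (auto simp: ends_at_def)
        moreover have "edge_of G h \<notin> {e1, e2}" using notpath[OF calculation xG(2)] .
        ultimately show "h \<in> ends_at ?N x" using xG(2) by (auto simp: Neg_def ends_at_def)
      qed
    qed
    then show "card (ends_at ?N x) = 3" using C(7)[OF xG(1)] by simp
  qed
  show ?thesis unfolding cubic_multipole_def using c1 c2 c3 c4 c5 by blast
qed



lemma joins_ends2:
  assumes "cubic_multipole G" "joins G e x y"
  obtains h1 h2 where "h1 \<in> hends G" "h2 \<in> hends G" "edge_of G h1 = e" "edge_of G h2 = e"
    "att G h1 = Some x" "att G h2 = Some y" "h1 \<noteq> h2"
    "\<And>h. h \<in> hends G \<Longrightarrow> edge_of G h = e \<Longrightarrow> h = h1 \<or> h = h2"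
proof -
  note C = cubicD[OF assms(1)]
  from assms(2) obtain h1 h2 where hh: "e \<in> edges G" "h1 \<in> hends G" "h2 \<in> hends G" "h1 \<noteq> h2"
    "edge_of G h1 = e" "edge_of G h2 = e" "att G h1 = Some x" "att G h2 = Some y"
    unfolding joins_def by blast
  have "h = h1 \<or> h = h2" if h: "h \<in> hends G" "edge_of G h = e" for h
  proof (rule ccontr)
    assume "\<not> (h = h1 \<or> h = h2)"
    then have "card {h1, h2, h} = 3" using hh(4) by auto
    moreover have "{h1, h2, h} \<subseteq> {h\<in>hends G. edge_of G h = e}" using hh h by auto
    moreover have "finite {h\<in>hends G. edge_of G h = e}" using C(2) by simp
    ultimately have "3 \<le> card {h\<in>hends G. edge_of G h = e}" by (metis card_mono)
    then show False using C(5)[OF hh(1)] by simp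
  qed
  then show ?thesis using that hh by blast
qed

lemma three_distinct:
  assumes "\<forall>h\<in>S. h = p \<or> h = q \<or> h = s" "f p \<noteq> f q" "f q \<noteq> f s" "f p \<noteq> f s"
    "h1 \<in> S" "h2 \<in> S" "h1 \<noteq> h2"
  shows "f h1 \<noteq> f h2"
  using assms by metis

locale negsetup =
  fixes G :: "('v, 'h, 'e) multipole" and u w v :: 'v and e1 e2 :: 'e and i1 i2 o1 o2 r :: 'h
  assumes snk: "snark G" and pth: "path2 G u w v e1 e2"
    and np: "neg_ports G u w v e1 e2 i1 i2 o1 o2 r"
begin

abbreviation "N \<equiv> Neg G u w v e1 e2"

lemma cubG: "cubic_multipole G" using snk by (simp add: snark_def)
lemma noSemi: "h \<in> hends G \<Longrightarrow> att G h \<noteq> None"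
  using snk by (auto simp: snark_def semiedges_def)

lemma pathD: "u \<in> verts G" "w \<in> verts G" "v \<in> verts G" "u \<noteq> w" "w \<noteq> v" "u \<noteq> v" "e1 \<noteq> e2"
  "joins G e1 u w" "joins G e2 w v"
  using pth by (simp_all add: path2_def)

lemma npD: "i1 \<noteq> i2" "o1 \<noteq> o2"
  "{h \<in> hends G. edge_of G h \<notin> {e1, e2} \<and> att G h = Some u} = {i1, i2}"
  "{h \<in> hends G. edge_of G h \<notin> {e1, e2} \<and> att G h = Some v} = {o1, o2}"
  "{h \<in> hends G. edge_of G h \<notin> {e1, e2} \<and> att G h = Some w} = {r}"
  using np by (simp_all add: neg_ports_def)

lemma portI: "i1 \<in> hends G" "edge_of G i1 \<noteq> e1" "edge_of G i1 \<noteq> e2" "att G i1 = Some u"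
  "i2 \<in> hends G" "edge_of G i2 \<noteq> e1" "edge_of G i2 \<noteq> e2" "att G i2 = Some u"
  "o1 \<in> hends G" "edge_of G o1 \<noteq> e1" "edge_of G o1 \<noteq> e2" "att G o1 = Some v"
  "o2 \<in> hends G" "edge_of G o2 \<noteq> e1" "edge_of G o2 \<noteq> e2" "att G o2 = Some v"
  "r \<in> hends G" "edge_of G r \<noteq> e1" "edge_of G r \<noteq> e2" "att G r = Some w"
proof -
  have a: "i1 \<in> {h \<in> hends G. edge_of G h \<notin> {e1, e2} \<and> att G h = Some u}"
    "i2 \<in> {h \<in> hends G. edge_of G h \<notin> {e1, e2} \<and> att G h = Some u}" using npD(3) by auto
  have b: "o1 \<in> {h \<in> hends G. edge_of G h \<notin> {e1, e2} \<and> att G h = Some v}"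
    "o2 \<in> {h \<in> hends G. edge_of G h \<notin> {e1, e2} \<and> att G h = Some v}" using npD(4) by auto
  have c: "r \<in> {h \<in> hends G. edge_of G h \<notin> {e1, e2} \<and> att G h = Some w}" using npD(5) by auto
  show "i1 \<in> hends G" "edge_of G i1 \<noteq> e1" "edge_of G i1 \<noteq> e2" "att G i1 = Some u"
  "i2 \<in> hends G" "edge_of G i2 \<noteq> e1" "edge_of G i2 \<noteq> e2" "att G i2 = Some u"
  "o1 \<in> hends G" "edge_of G o1 \<noteq> e1" "edge_of G o1 \<noteq> e2" "att G o1 = Some v"
  "o2 \<in> hends G" "edge_of G o2 \<noteq> e1" "edge_of G o2 \<noteq> e2" "att G o2 = Some v"
  "r \<in> hends G" "edge_of G r \<noteq> e1" "edge_of G r \<noteq> e2" "att G r = Some w"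
    using a b c by auto
qed

lemma N_semi: "semiedges N = {i1, i2, o1, o2, r}"
proof -
  have "semiedges N = {h \<in> hends G. edge_of G h \<notin> {e1, e2} \<and> att G h = Some u}
     \<union> {h \<in> hends G. edge_of G h \<notin> {e1, e2} \<and> att G h = Some v}
     \<union> {h \<in> hends G. edge_of G h \<notin> {e1, e2} \<and> att G h = Some w}"
    by (auto simp: Neg_def semiedges_def dest: noSemi)
  then show ?thesis unfolding npD by auto
qed

lemma N_parity:
  assumes "colouring N \<phi>"
  shows "\<phi> (edge_of G i1) + \<phi> (edge_of G i2) + \<phi> (edge_of G o1) + \<phi> (edge_of G o2)
     + \<phi> (edge_of G r) = 0"
proof -
  have "(\<Sum>h\<in>semiedges N. \<phi> (edge_of N h)) = 0"
    by (rule parity[OF neg_cubic[OF cubG pth] assms])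
  moreover have "edge_of N = edge_of G" by (simp add: Neg_def)
  moreover have d: "i1 \<notin> {i2, o1, o2, r}" "i2 \<notin> {o1, o2, r}" "o1 \<notin> {o2, r}" "o2 \<noteq> r"
    using portI pathD npD(1,2) by auto
  ultimately show ?thesis unfolding N_semi using d by (simp add: add.assoc)
qed

lemma N_prop:
  assumes col: "colouring N \<phi>"
  shows "\<phi> (edge_of G i1) = \<phi> (edge_of G i2) \<or> \<phi> (edge_of G o1) = \<phi> (edge_of G o2)"
proof (rule ccontr)
  let ?f = "\<lambda>h. \<phi> (edge_of G h)"
  assume "\<not> (?f i1 = ?f i2 \<or> ?f o1 = ?f o2)"
  then have ni: "?f i1 \<noteq> ?f i2" and no: "?f o1 \<noteq> ?f o2" by auto
  define A where "A = ?f i1 + ?f i2"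
  define B where "B = ?f o1 + ?f o2"
  define \<psi> where "\<psi> = \<phi>(e1 := A, e2 := B)"
  have eN: "edges N = edges G - {e1,e2}" "edge_of N = edge_of G" "verts N = verts G - {u, w, v}"
    by (simp_all add: Neg_def)
  note C = cubicD[OF cubG]
  have K: "\<phi> e \<in> KK" if "e \<in> edges G" "e \<noteq> e1" "e \<noteq> e2" for e
    using colouringD(1)[OF col] eN that by auto
  have kp: "?f i1 \<in> KK" "?f i2 \<in> KK" "?f o1 \<in> KK" "?f o2 \<in> KK" "?f r \<in> KK"
    using K C(4) portI by auto
  have Ak: "A \<in> KK" "A \<noteq> ?f i1" "A \<noteq> ?f i2" unfolding A_def using KK_add[OF kp(1,2) ni] by auto
  have Bk: "B \<in> KK" "B \<noteq> ?f o1" "B \<noteq> ?f o2" unfolding B_def using KK_add[OF kp(3,4) no] by auto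
  have par: "A + B + ?f r = 0" unfolding A_def B_def using N_parity[OF col] by (simp add: add.assoc)
  have ABr: "A \<noteq> B" "B \<noteq> ?f r" "A \<noteq> ?f r" using KK3'[OF Ak(1) Bk(1) kp(5) par] by auto
  have p1: "\<psi> e1 = A" "\<psi> e2 = B" using pathD(7) by (simp_all add: \<psi>_def)
  have p2: "\<psi> e = \<phi> e" if "e \<noteq> e1" "e \<noteq> e2" for e using that by (simp add: \<psi>_def)
  obtain a1 a2 where a: "a1 \<in> hends G" "a2 \<in> hends G" "edge_of G a1 = e1" "edge_of G a2 = e1"
    "att G a1 = Some u" "att G a2 = Some w" "a1 \<noteq> a2"
    "\<And>h. h \<in> hends G \<Longrightarrow> edge_of G h = e1 \<Longrightarrow> h = a1 \<or> h = a2"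
    using joins_ends2[OF cubG pathD(8)] by blast
  obtain b1 b2 where b: "b1 \<in> hends G" "b2 \<in> hends G" "edge_of G b1 = e2" "edge_of G b2 = e2"
    "att G b1 = Some w" "att G b2 = Some v" "b1 \<noteq> b2"
    "\<And>h. h \<in> hends G \<Longrightarrow> edge_of G h = e2 \<Longrightarrow> h = b1 \<or> h = b2"
    using joins_ends2[OF cubG pathD(9)] by blast
  have cG: "colouring G \<psi>"
    unfolding colouring_def
  proof (intro conjI ballI impI)
    fix e assume e: "e \<in> edges G"
    show "\<psi> e \<in> KK"
    proof (cases "e = e1")
      case True then show ?thesis using p1 Ak by simp
    next
      case False
      show ?thesis
      proof (cases "e = e2")
        case True then show ?thesis using p1 Bk by simp
      next
        case False2: False
        then show ?thesis using False p2 K e by simp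
      qed
    qed
  next
    fix x h1 h2 assume x: "x \<in> verts G" and h1: "h1 \<in> ends_at G x" and h2: "h2 \<in> ends_at G x"
      and ne: "h1 \<noteq> h2"
    let ?g = "\<lambda>h. \<psi> (edge_of G h)"
    have E: "h \<in> hends G" "att G h = Some x" if "h \<in> ends_at G x" for h
      using that by (auto simp: ends_at_def)
    have gp: "?g i1 = ?f i1" "?g i2 = ?f i2" "?g o1 = ?f o1" "?g o2 = ?f o2" "?g r = ?f r"
      using p2 portI by auto
    have ga: "?g a1 = A" "?g a2 = A" "?g b1 = B" "?g b2 = B" using a b p1 by auto
    show "?g h1 \<noteq> ?g h2"
    proof (cases "x = u")
      case True
      have "\<forall>h\<in>ends_at G x. h = a1 \<or> h = i1 \<or> h = i2"
      proof
        fix h assume "h \<in> ends_at G x"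
        note hh = E[OF this]
        show "h = a1 \<or> h = i1 \<or> h = i2"
        proof (cases "edge_of G h = e1")
          case True then show ?thesis using a(6,8) hh pathD(4) \<open>x = u\<close> by fastforce
        next
          case F1: False
          show ?thesis
          proof (cases "edge_of G h = e2")
            case True then show ?thesis using b(5,6,8) hh pathD(4,6) \<open>x = u\<close> by fastforce
          next
            case False
            then have "h \<in> {h \<in> hends G. edge_of G h \<notin> {e1, e2} \<and> att G h = Some u}"
              using F1 hh \<open>x = u\<close> by auto
            then show ?thesis unfolding npD by auto
          qed
        qed
      qed
      then show ?thesis
        by (rule three_distinct[where f = ?g]) (use ga gp Ak ni h1 h2 ne in auto)
    next
      case nu: False
      show ?thesis
      proof (cases "x = w")
        case True
        have "\<forall>h\<in>ends_at G x. h = a2 \<or> h = b1 \<or> h = r"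
        proof
          fix h assume "h \<in> ends_at G x"
          note hh = E[OF this]
          show "h = a2 \<or> h = b1 \<or> h = r"
          proof (cases "edge_of G h = e1")
            case True then show ?thesis using a(5,8) hh pathD(4) \<open>x = w\<close> by fastforce
          next
            case F1: False
            show ?thesis
            proof (cases "edge_of G h = e2")
              case True then show ?thesis using b(6,8) hh pathD(5) \<open>x = w\<close> by fastforce
            next
              case False
              then have "h \<in> {h \<in> hends G. edge_of G h \<notin> {e1, e2} \<and> att G h = Some w}"
                using F1 hh \<open>x = w\<close> by auto
              then show ?thesis unfolding npD by auto
            qed
          qed
        qed
        then show ?thesis
          by (rule three_distinct[where f = ?g]) (use ga gp ABr h1 h2 ne in auto)
      next
        case nw: False
        show ?thesis
        proof (cases "x = v")
          case True
          have "\<forall>h\<in>ends_at G x. h = b2 \<or> h = o1 \<or> h = o2"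
          proof
            fix h assume "h \<in> ends_at G x"
            note hh = E[OF this]
            show "h = b2 \<or> h = o1 \<or> h = o2"
            proof (cases "edge_of G h = e1")
              case True then show ?thesis using a(5,6,8) hh pathD(5,6) \<open>x = v\<close> by fastforce
            next
              case F1: False
              show ?thesis
              proof (cases "edge_of G h = e2")
                case True then show ?thesis using b(5,8) hh pathD(5) \<open>x = v\<close> by fastforce
              next
                case False
                then have "h \<in> {h \<in> hends G. edge_of G h \<notin> {e1, e2} \<and> att G h = Some v}"
                  using F1 hh \<open>x = v\<close> by auto
                then show ?thesis unfolding npD by auto
              qed
            qed
          qed
          then show ?thesis
            by (rule three_distinct[where f = ?g]) (use ga gp Bk no h1 h2 ne in auto)
        next
          case nv: False
          have xN: "x \<in> verts N" using x nu nw nv eN(3) by auto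
          have notp: "edge_of G h \<noteq> e1 \<and> edge_of G h \<noteq> e2" if "h \<in> ends_at G x" for h
          proof -
            note hh = E[OF that]
            have "edge_of G h \<noteq> e1" using a(5,6) a(8)[of h] hh nu nw by auto
            moreover have "edge_of G h \<noteq> e2" using b(5,6) b(8)[of h] hh nw nv by auto
            ultimately show ?thesis by simp
          qed
          have inN: "h \<in> ends_at N x" if "h \<in> ends_at G x" for h
            using notp[OF that] E[OF that] nu nw nv by (auto simp: Neg_def ends_at_def)
          have "?f h1 \<noteq> ?f h2"
            using colouringD(2)[OF col xN inN[OF h1] inN[OF h2] ne] eN(2) by simp
          then show ?thesis using p2 notp[OF h1] notp[OF h2] by simp
        qed
      qed
    qed
  qed
  then show False using snk by (auto simp: snark_def)
qed

end



locale nnsetup =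
  fixes N1 :: "('v1, 'h1, 'e1) multipole" and a1 a2 b1 b2 r1 :: 'h1
    and N2 :: "('v2, 'h2, 'e2) multipole" and c1 c2 d1 d2 r2 :: 'h2
  assumes cub1: "cubic_multipole N1" and cub2: "cubic_multipole N2"
    and P1: "a1 \<in> hends N1" "a2 \<in> hends N1" "b1 \<in> hends N1" "b2 \<in> hends N1" "r1 \<in> hends N1"
      "att N1 b1 = None" "att N1 b2 = None" "att N1 r1 = None"
      "a1 \<notin> {b1, b2}" "a2 \<notin> {b1, b2}" "r1 \<notin> {b1, b2}"
    and P2: "c1 \<in> hends N2" "c2 \<in> hends N2" "d1 \<in> hends N2" "d2 \<in> hends N2" "r2 \<in> hends N2"
      "att N2 c1 = None" "att N2 c2 = None" "att N2 r2 = None"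
      "d1 \<notin> {c1, c2}" "d2 \<notin> {c1, c2}" "r2 \<notin> {c1, c2}"
begin

abbreviation "M \<equiv> NN N1 b1 b2 r1 N2 c1 c2 r2"
abbreviation "cls \<equiv> nn_cls N1 b1 b2 N2 c1 c2"
abbreviation "RR \<equiv> {(Inl (edge_of N1 b1), Inr (Inl (edge_of N2 c1))),
               (Inl (edge_of N1 b2), Inr (Inl (edge_of N2 c2)))}"
abbreviation "JJ \<equiv> {Inl (edge_of N1 b1), Inl (edge_of N1 b2), Inr (Inl (edge_of N2 c1)),
               Inr (Inl (edge_of N2 c2))}"

lemma cls_def2: "cls x = (RR \<union> RR\<inverse>)\<^sup>* `` {x}"
  by (simp add: nn_cls_def Let_def)

lemma cls_self: "x \<in> cls x"
  unfolding cls_def2 by (simp add: Image_singleton_iff)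

lemma cls_eq:
  assumes "(x, y) \<in> RR"
  shows "cls x = cls y"
proof -
  let ?S = "RR \<union> RR\<inverse>"
  have xy: "(x, y) \<in> ?S" "(y, x) \<in> ?S" using assms by auto
  have "(x, z) \<in> ?S\<^sup>* \<longleftrightarrow> (y, z) \<in> ?S\<^sup>*" for z
  proof
    assume "(x, z) \<in> ?S\<^sup>*"
    then show "(y, z) \<in> ?S\<^sup>*" by (rule converse_rtrancl_into_rtrancl[OF xy(2)])
  next
    assume "(y, z) \<in> ?S\<^sup>*"
    then show "(x, z) \<in> ?S\<^sup>*" by (rule converse_rtrancl_into_rtrancl[OF xy(1)])
  qed
  then show ?thesis unfolding cls_def2 by (simp add: Image_singleton set_eq_iff)
qed

lemma cls_sub:
  assumes "y \<in> cls x"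
  shows "y = x \<or> (x \<in> JJ \<and> y \<in> JJ)"
proof -
  let ?S = "RR \<union> RR\<inverse>"
  have st: "(x, y) \<in> ?S\<^sup>*" using assms unfolding cls_def2 by blast
  show ?thesis
  proof (cases "x = y")
    case True then show ?thesis by simp
  next
    case False
    have "y \<in> JJ"
      using st False by (cases rule: rtranclE) auto
    moreover have "x \<in> JJ"
      using st False by (cases rule: converse_rtranclE) auto
    ultimately show ?thesis by simp
  qed
qed

lemma edge_M: "edge_of M h = cls (nn_old_edge N1 N2 h)"
  by (simp add: NN_def)

lemma edge_M_simps:
  "edge_of M (Inl h) = cls (Inl (edge_of N1 h))"
  "edge_of M (Inr (Inl h')) = cls (Inr (Inl (edge_of N2 h')))"
  "edge_of M (Inr (Inr b)) = cls (Inr (Inr ()))"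
  by (simp_all add: NN_def nn_old_edge_def)

lemma ends_M_some1:
  assumes "h \<in> ends_at M (Some (Inl x))"
  obtains h1 where "h = Inl h1" "h1 \<in> ends_at N1 x"
proof -
  have h: "h \<in> hends M" "att M h = Some (Some (Inl x))" using assms by (auto simp: ends_at_def)
  show ?thesis
  proof (cases h)
    case (Inl h1)
    then have "h1 \<in> hends N1" "h1 \<noteq> r1" "att N1 h1 = Some x"
      using h by (auto simp: NN_def split: if_splits)
    then show ?thesis using that Inl by (auto simp: ends_at_def)
  next
    case (Inr hr)
    then show ?thesis using h by (cases hr) (auto simp: NN_def split: if_splits)
  qed
qed

lemma ends_M_some2:
  assumes "h \<in> ends_at M (Some (Inr x))"
  obtains h2 where "h = Inr (Inl h2)" "h2 \<in> ends_at N2 x"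
proof -
  have h: "h \<in> hends M" "att M h = Some (Some (Inr x))" using assms by (auto simp: ends_at_def)
  show ?thesis
  proof (cases h)
    case (Inl h1)
    then show ?thesis using h by (auto simp: NN_def split: if_splits)
  next
    case (Inr hr)
    show ?thesis
    proof (cases hr)
      case (Inl h2)
      then have "h2 \<in> hends N2" "h2 \<noteq> r2" "att N2 h2 = Some x"
        using h Inr by (auto simp: NN_def split: if_splits)
      then show ?thesis using that Inr Inl by (auto simp: ends_at_def)
    next
      case (Inr b)
      then show ?thesis using h \<open>h = Inr hr\<close> by (auto simp: NN_def split: if_splits)
    qed
  qed
qed

lemma ends_M_none:
  assumes "h \<in> ends_at M None"
  shows "h = Inl r1 \<or> h = Inr (Inl r2) \<or> h = Inr (Inr True)"
proof -
  have h: "h \<in> hends M" "att M h = Some None" using assms by (auto simp: ends_at_def)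
  show ?thesis
  proof (cases h)
    case (Inl h1)
    then show ?thesis using h by (auto simp: NN_def split: if_splits)
  next
    case (Inr hr)
    then show ?thesis using h by (cases hr) (auto simp: NN_def split: if_splits)
  qed
qed

lemma ends_M_none_in:
  "Inl r1 \<in> ends_at M None" "Inr (Inl r2) \<in> ends_at M None" "Inr (Inr True) \<in> ends_at M None"
  using P1 P2 by (auto simp: NN_def ends_at_def)

lemma verts_M: "None \<in> verts M" "x \<in> verts N1 \<Longrightarrow> Some (Inl x) \<in> verts M"
  "y \<in> verts N2 \<Longrightarrow> Some (Inr y) \<in> verts M"
  by (auto simp: NN_def)

lemma edges_M: "e \<in> edges N1 \<Longrightarrow> cls (Inl e) \<in> edges M"
  "e' \<in> edges N2 \<Longrightarrow> cls (Inr (Inl e')) \<in> edges M"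
  "cls (Inr (Inr ())) \<in> edges M"
  by (auto simp: NN_def)

lemma inl_ends_M:
  assumes "h \<in> ends_at N1 x"
  shows "Inl h \<in> ends_at M (Some (Inl x))"
proof -
  have "h \<in> hends N1" "att N1 h = Some x" using assms by (auto simp: ends_at_def)
  moreover then have "h \<notin> {b1, b2}" "h \<noteq> r1" using P1 by auto
  ultimately show ?thesis by (auto simp: NN_def ends_at_def)
qed

lemma inr_ends_M:
  assumes "h \<in> ends_at N2 x"
  shows "Inr (Inl h) \<in> ends_at M (Some (Inr x))"
proof -
  have "h \<in> hends N2" "att N2 h = Some x" using assms by (auto simp: ends_at_def)
  moreover then have "h \<notin> {c1, c2}" "h \<noteq> r2" using P2 by auto
  ultimately show ?thesis by (auto simp: NN_def ends_at_def)
qed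

lemma restrict:
  assumes col: "colouring M \<phi>"
  shows "colouring N1 (\<lambda>e. \<phi> (cls (Inl e)))" "colouring N2 (\<lambda>e. \<phi> (cls (Inr (Inl e))))"
    "\<phi> (cls (Inl (edge_of N1 b1))) = \<phi> (cls (Inr (Inl (edge_of N2 c1))))"
    "\<phi> (cls (Inl (edge_of N1 b2))) = \<phi> (cls (Inr (Inl (edge_of N2 c2))))"
    "\<phi> (cls (Inl (edge_of N1 r1))) \<noteq> \<phi> (cls (Inr (Inl (edge_of N2 r2))))"
    "\<phi> (cls (Inl (edge_of N1 r1))) \<noteq> \<phi> (cls (Inr (Inr ())))"
    "\<phi> (cls (Inr (Inl (edge_of N2 r2)))) \<noteq> \<phi> (cls (Inr (Inr ())))"
    "\<phi> (cls (Inr (Inr ()))) \<in> KK"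
proof -
  note K = colouringD[OF col]
  show "colouring N1 (\<lambda>e. \<phi> (cls (Inl e)))"
    unfolding colouring_def
  proof (intro conjI ballI impI)
    fix e assume "e \<in> edges N1" then show "\<phi> (cls (Inl e)) \<in> KK" using K(1) edges_M(1) by blast
  next
    fix x h1 h2 assume x: "x \<in> verts N1" and h: "h1 \<in> ends_at N1 x" "h2 \<in> ends_at N1 x" "h1 \<noteq> h2"
    have "\<phi> (edge_of M (Inl h1)) \<noteq> \<phi> (edge_of M (Inl h2))"
      using K(2)[OF verts_M(2)[OF x] inl_ends_M[OF h(1)] inl_ends_M[OF h(2)]] h(3) by simp
    then show "\<phi> (cls (Inl (edge_of N1 h1))) \<noteq> \<phi> (cls (Inl (edge_of N1 h2)))"
      by (simp add: edge_M_simps)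
  qed
  show "colouring N2 (\<lambda>e. \<phi> (cls (Inr (Inl e))))"
    unfolding colouring_def
  proof (intro conjI ballI impI)
    fix e assume "e \<in> edges N2" then show "\<phi> (cls (Inr (Inl e))) \<in> KK" using K(1) edges_M(2) by blast
  next
    fix x h1 h2 assume x: "x \<in> verts N2" and h: "h1 \<in> ends_at N2 x" "h2 \<in> ends_at N2 x" "h1 \<noteq> h2"
    have "\<phi> (edge_of M (Inr (Inl h1))) \<noteq> \<phi> (edge_of M (Inr (Inl h2)))"
      using K(2)[OF verts_M(3)[OF x] inr_ends_M[OF h(1)] inr_ends_M[OF h(2)]] h(3) by simp
    then show "\<phi> (cls (Inr (Inl (edge_of N2 h1)))) \<noteq> \<phi> (cls (Inr (Inl (edge_of N2 h2))))"
      by (simp add: edge_M_simps)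
  qed
  show "\<phi> (cls (Inl (edge_of N1 b1))) = \<phi> (cls (Inr (Inl (edge_of N2 c1))))"
    using cls_eq[of "Inl (edge_of N1 b1)" "Inr (Inl (edge_of N2 c1))"] by simp
  show "\<phi> (cls (Inl (edge_of N1 b2))) = \<phi> (cls (Inr (Inl (edge_of N2 c2))))"
    using cls_eq[of "Inl (edge_of N1 b2)" "Inr (Inl (edge_of N2 c2))"] by simp
  note V = K(2)[OF verts_M(1)]
  show "\<phi> (cls (Inl (edge_of N1 r1))) \<noteq> \<phi> (cls (Inr (Inl (edge_of N2 r2))))"
    using V[OF ends_M_none_in(1) ends_M_none_in(2)] by (simp add: edge_M_simps)
  show "\<phi> (cls (Inl (edge_of N1 r1))) \<noteq> \<phi> (cls (Inr (Inr ())))"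
    using V[OF ends_M_none_in(1) ends_M_none_in(3)] by (simp add: edge_M_simps)
  show "\<phi> (cls (Inr (Inl (edge_of N2 r2)))) \<noteq> \<phi> (cls (Inr (Inr ())))"
    using V[OF ends_M_none_in(2) ends_M_none_in(3)] by (simp add: edge_M_simps)
  show "\<phi> (cls (Inr (Inr ()))) \<in> KK" using K(1)[OF edges_M(3)] .
qed

lemma extend:
  assumes col1: "colouring N1 \<phi>1" and col2: "colouring N2 \<phi>2"
    and j: "\<phi>1 (edge_of N1 b1) = xc" "\<phi>1 (edge_of N1 b2) = xc" "\<phi>2 (edge_of N2 c1) = xc"
      "\<phi>2 (edge_of N2 c2) = xc"
    and ec: "ec \<in> KK" "\<phi>1 (edge_of N1 r1) \<noteq> \<phi>2 (edge_of N2 r2)" "\<phi>1 (edge_of N1 r1) \<noteq> ec"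
      "\<phi>2 (edge_of N2 r2) \<noteq> ec"
  shows "\<exists>\<psi>. colouring M \<psi> \<and> (\<forall>e. \<psi> (cls (Inl e)) = \<phi>1 e) \<and> (\<forall>e. \<psi> (cls (Inr (Inl e))) = \<phi>2 e)
     \<and> \<psi> (cls (Inr (Inr ()))) = ec"
proof -
  define c :: "'e1 + 'e2 + unit \<Rightarrow> colour" where "c z = (case z of Inl e \<Rightarrow> \<phi>1 e | Inr (Inl e) \<Rightarrow> \<phi>2 e | Inr (Inr _) \<Rightarrow> ec)" for z
  have cJ: "c z = xc" if "z \<in> JJ" for z using that j by (auto simp: c_def)
  have cc: "c y = c z" if "y \<in> cls z" for y z
    using cls_sub[OF that] cJ by metis
  define \<psi> where "\<psi> S = c (SOME y. y \<in> S)" for S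
  have \<psi>c: "\<psi> (cls z) = c z" for z
  proof -
    have "(SOME y. y \<in> cls z) \<in> cls z" using cls_self by (rule someI)
    then show ?thesis unfolding \<psi>_def by (rule cc)
  qed
  have \<psi>1: "\<psi> (cls (Inl e)) = \<phi>1 e" for e using \<psi>c by (simp add: c_def)
  have \<psi>2: "\<psi> (cls (Inr (Inl e))) = \<phi>2 e" for e using \<psi>c by (simp add: c_def)
  have \<psi>3: "\<psi> (cls (Inr (Inr ()))) = ec" using \<psi>c by (simp add: c_def)
  note K1 = colouringD[OF col1] and K2 = colouringD[OF col2]
  have "colouring M \<psi>"
    unfolding colouring_def
  proof (intro conjI ballI impI)
    fix S assume "S \<in> edges M"
    then obtain z where z: "S = cls z" "z \<in> Inl ` edges N1 \<union> Inr ` Inl ` edges N2 \<union> {Inr (Inr ())}"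
      by (auto simp: NN_def)
    then show "\<psi> S \<in> KK" using \<psi>1 \<psi>2 \<psi>3 K1(1) K2(1) ec(1) by auto
  next
    fix x h1 h2 assume x: "x \<in> verts M" and h: "h1 \<in> ends_at M x" "h2 \<in> ends_at M x" "h1 \<noteq> h2"
    have "x = None \<or> (\<exists>x1 \<in> verts N1. x = Some (Inl x1)) \<or> (\<exists>x2 \<in> verts N2. x = Some (Inr x2))"
      using x by (auto simp: NN_def)
    then show "\<psi> (edge_of M h1) \<noteq> \<psi> (edge_of M h2)"
    proof (elim disjE bexE)
      assume xn: "x = None"
      have "\<forall>h\<in>ends_at M x. h = Inl r1 \<or> h = Inr (Inl r2) \<or> h = Inr (Inr True)"
        using ends_M_none xn by blast
      then show ?thesis
        by (rule three_distinct[where f = "\<lambda>h. \<psi> (edge_of M h)"])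
           (use h ec \<psi>1 \<psi>2 \<psi>3 in \<open>auto simp: edge_M_simps\<close>)
    next
      fix x1 assume x1: "x1 \<in> verts N1" "x = Some (Inl x1)"
      obtain g1 where g1: "h1 = Inl g1" "g1 \<in> ends_at N1 x1" using ends_M_some1 h(1) x1(2) by blast
      obtain g2 where g2: "h2 = Inl g2" "g2 \<in> ends_at N1 x1" using ends_M_some1 h(2) x1(2) by blast
      have "g1 \<noteq> g2" using g1 g2 h(3) by auto
      then have "\<phi>1 (edge_of N1 g1) \<noteq> \<phi>1 (edge_of N1 g2)" using K1(2)[OF x1(1) g1(2) g2(2)] by blast
      then show ?thesis using g1(1) g2(1) \<psi>1 by (simp add: edge_M_simps)
    next
      fix x2 assume x2: "x2 \<in> verts N2" "x = Some (Inr x2)"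
      obtain g1 where g1: "h1 = Inr (Inl g1)" "g1 \<in> ends_at N2 x2" using ends_M_some2 h(1) x2(2) by blast
      obtain g2 where g2: "h2 = Inr (Inl g2)" "g2 \<in> ends_at N2 x2" using ends_M_some2 h(2) x2(2) by blast
      have "g1 \<noteq> g2" using g1 g2 h(3) by auto
      then have "\<phi>2 (edge_of N2 g1) \<noteq> \<phi>2 (edge_of N2 g2)" using K2(2)[OF x2(1) g1(2) g2(2)] by blast
      then show ?thesis using g1(1) g2(1) \<psi>2 by (simp add: edge_M_simps)
    qed
  qed
  then show ?thesis using \<psi>1 \<psi>2 \<psi>3 by blast
qed

end



context negsetup
begin

lemma Nfacts: "cubic_multipole N" "edge_of N = edge_of G"
  "i1 \<in> hends N" "i2 \<in> hends N" "o1 \<in> hends N" "o2 \<in> hends N" "r \<in> hends N"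
  "att N i1 = None" "att N i2 = None" "att N o1 = None" "att N o2 = None" "att N r = None"
  "i1 \<notin> {o1, o2}" "i2 \<notin> {o1, o2}" "r \<notin> {o1, o2}"
  "o1 \<notin> {i1, i2}" "o2 \<notin> {i1, i2}" "r \<notin> {i1, i2}"
  using neg_cubic[OF cubG pth] portI pathD by (auto simp: Neg_def)


end

lemma minus_colour: "- (c::colour) = c"
  by (cases c) simp

lemma sumzero: "(a::colour) + b = 0 \<longleftrightarrow> a = b"
proof
  assume "a + b = 0"
  then have "a = - b" by (simp add: add_eq_0_iff)
  then show "a = b" by (simp add: minus_colour)
next
  assume "a = b" then show "a + b = 0" by (simp add: self_add)
qed

lemma solve3: "(a::colour) + b + c = 0 \<Longrightarrow> c = a + b"
  using sumzero[of "a + b" c] by simp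

lemma combine:
  fixes S1 T S2 R1 R2 E :: colour
  assumes p1: "S1 + T + R1 = 0" and p2: "T + S2 + R2 = 0"
    and n1: "S1 = 0 \<or> T = 0" and n2: "T = 0 \<or> S2 = 0"
    and k: "R1 \<in> KK" "R2 \<in> KK" "E \<in> KK" and d: "R1 \<noteq> R2" "R1 \<noteq> E" "R2 \<noteq> E"
  shows "S1 \<noteq> 0" "S2 \<noteq> 0" "S1 + S2 + E = 0"
proof -
  have r1: "R1 = S1 + T" using solve3[OF p1] .
  have r2: "R2 = T + S2" using solve3[OF p2] .
  show s1: "S1 \<noteq> 0"
  proof
    assume "S1 = 0"
    then have "R1 = T" using r1 by simp
    then have "T \<noteq> 0" using k(1) zero_notin_KK by auto
    then have "S2 = 0" using n2 by simp
    then have "R2 = T" using r2 by simp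
    then show False using \<open>R1 = T\<close> d(1) by simp
  qed
  then have t: "T = 0" using n1 by simp
  then have "R2 = S2" using r2 by simp
  then show "S2 \<noteq> 0" using k(2) zero_notin_KK by auto
  have "R1 + R2 + E = 0" by (rule KK3[OF k d(1) d(3) d(2)])
  then show "S1 + S2 + E = 0" using r1 r2 t by simp
qed

lemma perfect_get:
  assumes "perfect_neg N i1 i2 o1 o2 r" "t \<in> {(x, x, a, b, a + b) | x a b. x \<in> KK \<and> a \<in> KK \<and> b \<in> KK \<and> a \<noteq> b}
       \<union> {(a, b, x, x, a + b) | x a b. x \<in> KK \<and> a \<in> KK \<and> b \<in> KK \<and> a \<noteq> b}"
  shows "\<exists>\<phi>. colouring N \<phi> \<and> t = (\<phi> (edge_of N i1), \<phi> (edge_of N i2), \<phi> (edge_of N o1),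
     \<phi> (edge_of N o2), \<phi> (edge_of N r))"
proof -
  have "t \<in> {(\<phi> (edge_of N i1), \<phi> (edge_of N i2), \<phi> (edge_of N o1), \<phi> (edge_of N o2), \<phi> (edge_of N r))
       | \<phi>. colouring N \<phi>}"
    using assms unfolding perfect_neg_def by simp
  then show ?thesis by blast
qed

theorem mainTheorem2:
  fixes G1 :: "('v1, 'h1, 'e1) multipole" and G2 :: "('v2, 'h2, 'e2) multipole"
    and u1 w1 v1 :: 'v1 and e11 e12 :: 'e1 and i1 i1' o1 o1' r1 :: 'h1
    and u2 w2 v2 :: 'v2 and e21 e22 :: 'e2 and i2 i2' o2 o2' r2 :: 'h2
  assumes "snark G1" and "path2 G1 u1 w1 v1 e11 e12"
    and "neg_ports G1 u1 w1 v1 e11 e12 i1 i1' o1 o1' r1"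
    and "snark G2" and "path2 G2 u2 w2 v2 e21 e22"
    and "neg_ports G2 u2 w2 v2 e21 e22 i2 i2' o2 o2' r2"
  defines "N1 \<equiv> Neg G1 u1 w1 v1 e11 e12" and "N2 \<equiv> Neg G2 u2 w2 v2 e21 e22"
  defines "M \<equiv> NN N1 o1 o1' r1 N2 i2 i2' r2"
  shows "(\<forall>\<phi>. colouring M \<phi> \<longrightarrow>
            \<phi> (edge_of M (Inl i1)) \<noteq> \<phi> (edge_of M (Inl i1')) \<and>
            \<phi> (edge_of M (Inr (Inl o2))) \<noteq> \<phi> (edge_of M (Inr (Inl o2'))) \<and>
            \<phi> (edge_of M (Inl i1)) + \<phi> (edge_of M (Inl i1')) + \<phi> (edge_of M (Inr (Inl o2)))
              + \<phi> (edge_of M (Inr (Inl o2'))) + \<phi> (edge_of M (Inr (Inr False))) = 0)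
       \<and> (perfect_neg N1 i1 i1' o1 o1' r1 \<and> perfect_neg N2 i2 i2' o2 o2' r2 \<longrightarrow>
            (\<forall>a \<in> KK. \<forall>b \<in> KK. \<forall>c \<in> KK. \<forall>d \<in> KK. \<forall>e \<in> KK.
               a \<noteq> b \<and> c \<noteq> d \<and> a + b + c + d + e = 0 \<longrightarrow>
               (\<exists>\<phi>. colouring M \<phi> \<and>
                  \<phi> (edge_of M (Inl i1)) = a \<and> \<phi> (edge_of M (Inl i1')) = b \<and>
                  \<phi> (edge_of M (Inr (Inl o2))) = c \<and> \<phi> (edge_of M (Inr (Inl o2'))) = d \<and>
                  \<phi> (edge_of M (Inr (Inr False))) = e)))"
proof -
  interpret L1: negsetup G1 u1 w1 v1 e11 e12 i1 i1' o1 o1' r1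
    using assms(1-3) by (rule negsetup.intro)
  interpret L2: negsetup G2 u2 w2 v2 e21 e22 i2 i2' o2 o2' r2
    using assms(4-6) by (rule negsetup.intro)
  interpret NS: nnsetup "Neg G1 u1 w1 v1 e11 e12" i1 i1' o1 o1' r1 "Neg G2 u2 w2 v2 e21 e22" i2 i2' o2 o2' r2
    by unfold_locales (use L1.Nfacts L2.Nfacts in auto)
  have EM: "edge_of M (Inl h) = NS.cls (Inl (edge_of G1 h))"
    "edge_of M (Inr (Inl h')) = NS.cls (Inr (Inl (edge_of G2 h')))"
    "edge_of M (Inr (Inr bb)) = NS.cls (Inr (Inr ()))" for h h' bb
    unfolding M_def N1_def N2_def NS.edge_M_simps L1.Nfacts(2) L2.Nfacts(2) by simp_all
  have part1: "\<forall>\<phi>. colouring M \<phi> \<longrightarrow>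
            \<phi> (edge_of M (Inl i1)) \<noteq> \<phi> (edge_of M (Inl i1')) \<and>
            \<phi> (edge_of M (Inr (Inl o2))) \<noteq> \<phi> (edge_of M (Inr (Inl o2'))) \<and>
            \<phi> (edge_of M (Inl i1)) + \<phi> (edge_of M (Inl i1')) + \<phi> (edge_of M (Inr (Inl o2)))
              + \<phi> (edge_of M (Inr (Inl o2'))) + \<phi> (edge_of M (Inr (Inr False))) = 0"
  proof (intro allI impI)
    fix \<phi> assume col0: "colouring M \<phi>"
    then have col: "colouring NS.M \<phi>" unfolding M_def N1_def N2_def .
    note R = NS.restrict[OF col]
    define A where "A = \<phi> (NS.cls (Inl (edge_of G1 i1)))"
    define A' where "A' = \<phi> (NS.cls (Inl (edge_of G1 i1')))"
    define B where "B = \<phi> (NS.cls (Inl (edge_of G1 o1)))"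
    define B' where "B' = \<phi> (NS.cls (Inl (edge_of G1 o1')))"
    define R1 where "R1 = \<phi> (NS.cls (Inl (edge_of G1 r1)))"
    define C where "C = \<phi> (NS.cls (Inr (Inl (edge_of G2 i2))))"
    define C' where "C' = \<phi> (NS.cls (Inr (Inl (edge_of G2 i2'))))"
    define D where "D = \<phi> (NS.cls (Inr (Inl (edge_of G2 o2))))"
    define D' where "D' = \<phi> (NS.cls (Inr (Inl (edge_of G2 o2'))))"
    define R2 where "R2 = \<phi> (NS.cls (Inr (Inl (edge_of G2 r2))))"
    define E where "E = \<phi> (NS.cls (Inr (Inr ())))"
    have pr1: "A = A' \<or> B = B'" using L1.N_prop[OF R(1)] unfolding A_def A'_def B_def B'_def by simp
    have pr2: "C = C' \<or> D = D'" using L2.N_prop[OF R(2)] unfolding C_def C'_def D_def D'_def by simp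
    have pa1: "A + A' + B + B' + R1 = 0" using L1.N_parity[OF R(1)]
      unfolding A_def A'_def B_def B'_def R1_def by simp
    have pa2: "C + C' + D + D' + R2 = 0" using L2.N_parity[OF R(2)]
      unfolding C_def C'_def D_def D'_def R2_def by simp
    have j: "B = C" "B' = C'" using R(3,4) unfolding B_def C_def B'_def C'_def L1.Nfacts(2) L2.Nfacts(2) .
    have rr: "R1 \<noteq> R2" "R1 \<noteq> E" "R2 \<noteq> E" "E \<in> KK"
      using R(5-8) unfolding R1_def R2_def E_def L1.Nfacts(2) L2.Nfacts(2) by simp_all
    have k1: "R1 \<in> KK" using colouringD(1)[OF R(1)] cubicD(4)[OF L1.Nfacts(1) L1.Nfacts(7)]
      unfolding R1_def L1.Nfacts(2) by simp
    have k2: "R2 \<in> KK" using colouringD(1)[OF R(2)] cubicD(4)[OF L2.Nfacts(1) L2.Nfacts(7)]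
      unfolding R2_def L2.Nfacts(2) by simp
    have "(A + A') + (B + B') + R1 = 0" using pa1 by (simp add: add.assoc)
    moreover have "(B + B') + (D + D') + R2 = 0" using pa2 j by (simp add: add.assoc)
    moreover have "A + A' = 0 \<or> B + B' = 0" using pr1 by (simp add: sumzero)
    moreover have "B + B' = 0 \<or> D + D' = 0" using pr2 j by (simp add: sumzero)
    ultimately have cmb: "A + A' \<noteq> 0" "D + D' \<noteq> 0" "(A + A') + (D + D') + E = 0"
      using combine[OF _ _ _ _ k1 k2 rr(4) rr(1-3)] by blast+
    have "A \<noteq> A'" "D \<noteq> D'" using cmb(1,2) by (auto simp: sumzero)
    moreover have "A + A' + D + D' + E = 0" using cmb(3) by (simp add: add.assoc)
    ultimately show "\<phi> (edge_of M (Inl i1)) \<noteq> \<phi> (edge_of M (Inl i1')) \<and>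
            \<phi> (edge_of M (Inr (Inl o2))) \<noteq> \<phi> (edge_of M (Inr (Inl o2'))) \<and>
            \<phi> (edge_of M (Inl i1)) + \<phi> (edge_of M (Inl i1')) + \<phi> (edge_of M (Inr (Inl o2)))
              + \<phi> (edge_of M (Inr (Inl o2'))) + \<phi> (edge_of M (Inr (Inr False))) = 0"
      unfolding EM A_def A'_def D_def D'_def E_def by simp
  qed
  have part2: "perfect_neg N1 i1 i1' o1 o1' r1 \<and> perfect_neg N2 i2 i2' o2 o2' r2 \<longrightarrow>
            (\<forall>a \<in> KK. \<forall>b \<in> KK. \<forall>c \<in> KK. \<forall>d \<in> KK. \<forall>e \<in> KK.
               a \<noteq> b \<and> c \<noteq> d \<and> a + b + c + d + e = 0 \<longrightarrow>
               (\<exists>\<phi>. colouring M \<phi> \<and>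
                  \<phi> (edge_of M (Inl i1)) = a \<and> \<phi> (edge_of M (Inl i1')) = b \<and>
                  \<phi> (edge_of M (Inr (Inl o2))) = c \<and> \<phi> (edge_of M (Inr (Inl o2'))) = d \<and>
                  \<phi> (edge_of M (Inr (Inr False))) = e))"
  proof (intro impI ballI)
    fix a b c d e
    assume pf: "perfect_neg N1 i1 i1' o1 o1' r1 \<and> perfect_neg N2 i2 i2' o2 o2' r2"
      and ks: "a \<in> KK" "b \<in> KK" "c \<in> KK" "d \<in> KK" "e \<in> KK"
      and cnd: "a \<noteq> b \<and> c \<noteq> d \<and> a + b + c + d + e = 0"
    have ab: "a \<noteq> b" and cd: "c \<noteq> d" and sm: "a + b + c + d + e = 0" using cnd by auto
    obtain \<phi>1 where c1: "colouring N1 \<phi>1" and t1: "(a, b, a, a, a + b) = (\<phi>1 (edge_of N1 i1),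
        \<phi>1 (edge_of N1 i1'), \<phi>1 (edge_of N1 o1), \<phi>1 (edge_of N1 o1'), \<phi>1 (edge_of N1 r1))"
      using perfect_get[OF pf[THEN conjunct1], of "(a, b, a, a, a + b)"] ks ab by blast
    obtain \<phi>2 where c2: "colouring N2 \<phi>2" and t2: "(a, a, c, d, c + d) = (\<phi>2 (edge_of N2 i2),
        \<phi>2 (edge_of N2 i2'), \<phi>2 (edge_of N2 o2), \<phi>2 (edge_of N2 o2'), \<phi>2 (edge_of N2 r2))"
      using perfect_get[OF pf[THEN conjunct2], of "(a, a, c, d, c + d)"] ks cd by blast
    have abk: "a + b \<in> KK" using KK_add[OF ks(1,2) ab] by simp
    have cdk: "c + d \<in> KK" using KK_add[OF ks(3,4) cd] by simp
    have "(a + b) + (c + d) + e = 0" using sm by (simp add: add.assoc)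
    note dd = KK3'[OF abk cdk ks(5) this]
    obtain \<psi> where psi: "colouring NS.M \<psi>" "\<forall>x. \<psi> (NS.cls (Inl x)) = \<phi>1 x"
      "\<forall>x. \<psi> (NS.cls (Inr (Inl x))) = \<phi>2 x" "\<psi> (NS.cls (Inr (Inr ()))) = e"
    proof -
      have c1': "colouring (Neg G1 u1 w1 v1 e11 e12) \<phi>1" using c1 unfolding N1_def .
      have c2': "colouring (Neg G2 u2 w2 v2 e21 e22) \<phi>2" using c2 unfolding N2_def .
      have jj: "\<phi>1 (edge_of (Neg G1 u1 w1 v1 e11 e12) o1) = a" "\<phi>1 (edge_of (Neg G1 u1 w1 v1 e11 e12) o1') = a"
        "\<phi>2 (edge_of (Neg G2 u2 w2 v2 e21 e22) i2) = a" "\<phi>2 (edge_of (Neg G2 u2 w2 v2 e21 e22) i2') = a"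
        "\<phi>1 (edge_of (Neg G1 u1 w1 v1 e11 e12) r1) = a + b" "\<phi>2 (edge_of (Neg G2 u2 w2 v2 e21 e22) r2) = c + d"
        using t1 t2 unfolding N1_def N2_def prod.inject by metis+
      have "\<phi>1 (edge_of (Neg G1 u1 w1 v1 e11 e12) r1) \<noteq> \<phi>2 (edge_of (Neg G2 u2 w2 v2 e21 e22) r2)"
        "\<phi>1 (edge_of (Neg G1 u1 w1 v1 e11 e12) r1) \<noteq> e"
        "\<phi>2 (edge_of (Neg G2 u2 w2 v2 e21 e22) r2) \<noteq> e"
        unfolding jj(5,6) using dd by simp_all
      from NS.extend[OF c1' c2' jj(1-4) ks(5) this] show ?thesis using that by blast
    qed
    have "colouring M \<psi>" using psi(1) unfolding M_def N1_def N2_def .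
    moreover have "\<psi> (edge_of M (Inl i1)) = a" "\<psi> (edge_of M (Inl i1')) = b"
      "\<psi> (edge_of M (Inr (Inl o2))) = c" "\<psi> (edge_of M (Inr (Inl o2'))) = d"
      "\<psi> (edge_of M (Inr (Inr False))) = e"
      using psi(2-4) t1 t2 unfolding EM N1_def N2_def L1.Nfacts(2) L2.Nfacts(2) by simp_all
    ultimately show "\<exists>\<phi>. colouring M \<phi> \<and>
                  \<phi> (edge_of M (Inl i1)) = a \<and> \<phi> (edge_of M (Inl i1')) = b \<and>
                  \<phi> (edge_of M (Inr (Inl o2))) = c \<and> \<phi> (edge_of M (Inr (Inl o2'))) = d \<and>
                  \<phi> (edge_of M (Inr (Inr False))) = e" by blast
  qed
  show ?thesis using part1 part2 by blast
qed


end
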